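(* Let $c\in(0,1)$ and $C\ge1$ be constants such that for all $n\ge1$, all integers $0\le w\le cn$ and all integers $0\le i\le n/2$, $|K^{(n)}_w(i)|\le C\binom nw(1-\frac{2w}{n})^i$. Let $\mathcal{C}\subseteq\mathbb{F}_2^n$ be a binary linear $[n,k]$ code with $1\le k\le n-1$, generator matrix $G\in\mathbb{F}_2^{k\times n}$ (of rank $k$), and dual distance $d^\perp$; put $t^\perp=\lfloor(d^\perp-1)/2\rfloor$. Let $w$ be a nonnegative integer with $w\le cn$, let $\varepsilon>0$, and let $Z$ be a random vector on $\mathbb{F}_2^n$ with $d_{TV}(P_{GZ},P_{U_k})\le\varepsilon$. Then there exists $e\in\mathbb{F}_2^n$ with $|e|=w$ such that $$|\mathrm{bias}(e^\intercal Z)|\le\sqrt{\frac{|\mathcal{C}^\perp|V_n(t^\perp)}{2^{n+1}}}+\frac{\sqrt{Cn}}{2}\left(1-\frac{2w}{n}\right)^{t^\perp/2}+\sqrt{\frac\varepsilon2}.$$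
   Context: Krawtchouk polynomial: $K^{(n)}_w(i)=\sum_{j=0}^w(-1)^j\binom ij\binom{n-i}{w-j}$. The dual distance $d^\perp$ is the minimum Hamming weight of a nonzero vector of $\mathcal{C}^\perp$. $V_n(t)=\sum_{j=0}^t\binom nj$. For a $\{0,1\}$-valued random variable $\xi$, $\mathrm{bias}(\xi)=\frac12-\Pr(\xi=1)=\frac{\Pr(\xi=0)-\Pr(\xi=1)}{2}$. $P_{GZ}$ is the distribution of $GZ\in\mathbb{F}_2^k$, $P_{U_k}$ the uniform distribution on $\mathbb{F}_2^k$, and $d_{TV}(P,Q)=\frac12\sum_x|P(x)-Q(x)|$. $|e|$ denotes Hamming weight. *)

theory Defs
  imports "HOL-Probability.Probability"
begin

text \<open>Vectors of F_2^n are represented as functions nat => bool that vanish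
  outside {0..<n} (True = 1, False = 0).\<close>

definition F2vecs :: "nat \<Rightarrow> (nat \<Rightarrow> bool) set" where
  "F2vecs n = {x. \<forall>i. n \<le> i \<longrightarrow> \<not> x i}"

definition hweight :: "nat \<Rightarrow> (nat \<Rightarrow> bool) \<Rightarrow> nat" where
  "hweight n x = card {i. i < n \<and> x i}"

definition f2inner :: "nat \<Rightarrow> (nat \<Rightarrow> bool) \<Rightarrow> (nat \<Rightarrow> bool) \<Rightarrow> bool" where
  "f2inner n x y = odd (card {i. i < n \<and> x i \<and> y i})"

text \<open>G is a k x n matrix over F_2 (entries G i j, i<k, j<n).
  mat_vec: G z in F_2^k.  encode: the codeword m^T G for a message m in F_2^k.\<close>
definition mat_vec :: "nat \<Rightarrow> nat \<Rightarrow> (nat \<Rightarrow> nat \<Rightarrow> bool) \<Rightarrow> (nat \<Rightarrow> bool) \<Rightarrow> (nat \<Rightarrow> bool)" where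
  "mat_vec k n G z = (\<lambda>i. i < k \<and> odd (card {j. j < n \<and> G i j \<and> z j}))"

definition encode :: "nat \<Rightarrow> nat \<Rightarrow> (nat \<Rightarrow> nat \<Rightarrow> bool) \<Rightarrow> (nat \<Rightarrow> bool) \<Rightarrow> (nat \<Rightarrow> bool)" where
  "encode k n G m = (\<lambda>j. j < n \<and> odd (card {i. i < k \<and> m i \<and> G i j}))"

definition gen_code :: "nat \<Rightarrow> nat \<Rightarrow> (nat \<Rightarrow> nat \<Rightarrow> bool) \<Rightarrow> (nat \<Rightarrow> bool) set" where
  "gen_code k n G = encode k n G ` F2vecs k"

definition full_rank :: "nat \<Rightarrow> nat \<Rightarrow> (nat \<Rightarrow> nat \<Rightarrow> bool) \<Rightarrow> bool" where
  "full_rank k n G = (\<forall>m \<in> F2vecs k. encode k n G m = (\<lambda>_. False) \<longrightarrow> m = (\<lambda>_. False))"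

definition dual_code :: "nat \<Rightarrow> (nat \<Rightarrow> bool) set \<Rightarrow> (nat \<Rightarrow> bool) set" where
  "dual_code n C = {y \<in> F2vecs n. \<forall>x \<in> C. \<not> f2inner n x y}"

definition dual_distance :: "nat \<Rightarrow> (nat \<Rightarrow> bool) set \<Rightarrow> nat" where
  "dual_distance n C = Min (hweight n ` (dual_code n C - {\<lambda>_. False}))"

definition krawtchouk :: "nat \<Rightarrow> nat \<Rightarrow> nat \<Rightarrow> real" where
  "krawtchouk n w i = (\<Sum>j = 0..w. (-1) ^ j * real (i choose j) * real ((n - i) choose (w - j)))"

definition hamming_ball_vol :: "nat \<Rightarrow> nat \<Rightarrow> nat" where
  "hamming_ball_vol n t = (\<Sum>j = 0..t. n choose j)"

definition tv_dist_on :: "'a set \<Rightarrow> 'a pmf \<Rightarrow> 'a pmf \<Rightarrow> real" where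
  "tv_dist_on S P Q = (1/2) * (\<Sum>x\<in>S. \<bar>pmf P x - pmf Q x\<bar>)"

definition bias_inner :: "nat \<Rightarrow> (nat \<Rightarrow> bool) \<Rightarrow> (nat \<Rightarrow> bool) pmf \<Rightarrow> real" where
  "bias_inner n e Z = 1/2 - measure_pmf.prob Z {z. f2inner n e z}"

end

theory Submission
  imports Defs
begin


definition xorv :: "(nat \<Rightarrow> bool) \<Rightarrow> (nat \<Rightarrow> bool) \<Rightarrow> (nat \<Rightarrow> bool)" where
  "xorv x y = (\<lambda>i. x i \<noteq> y i)"

definition chi :: "nat \<Rightarrow> (nat \<Rightarrow> bool) \<Rightarrow> (nat \<Rightarrow> bool) \<Rightarrow> real" where
  "chi n e z = (-1) ^ card {i. i < n \<and> e i \<and> z i}"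

lemma card_parity:
  assumes "finite A"
  shows "card {i\<in>A. P i \<noteq> Q i} + 2 * card {i\<in>A. P i \<and> Q i} = card {i\<in>A. P i} + card {i\<in>A. Q i}"
proof -
  have f: "finite {i\<in>A. R i}" for R using assms by simp
  have u1: "{i\<in>A. P i} = {i\<in>A. P i \<and> Q i} \<union> {i\<in>A. P i \<and> \<not> Q i}" by auto
  have u2: "{i\<in>A. Q i} = {i\<in>A. P i \<and> Q i} \<union> {i\<in>A. \<not> P i \<and> Q i}" by auto
  have u3: "{i\<in>A. P i \<noteq> Q i} = {i\<in>A. P i \<and> \<not> Q i} \<union> {i\<in>A. \<not> P i \<and> Q i}" by auto
  have a: "card {i\<in>A. P i} = card {i\<in>A. P i \<and> Q i} + card {i\<in>A. P i \<and> \<not> Q i}"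
    unfolding u1 by (rule card_Un_disjoint) (auto simp: assms)
  have b: "card {i\<in>A. Q i} = card {i\<in>A. P i \<and> Q i} + card {i\<in>A. \<not> P i \<and> Q i}"
    unfolding u2 by (rule card_Un_disjoint) (auto simp: assms)
  have c: "card {i\<in>A. P i \<noteq> Q i} = card {i\<in>A. P i \<and> \<not> Q i} + card {i\<in>A. \<not> P i \<and> Q i}"
    unfolding u3 by (rule card_Un_disjoint) (auto simp: assms)
  show ?thesis using a b c by simp
qed

lemma card_parity_odd:
  assumes "finite A"
  shows "odd (card {i\<in>A. P i \<noteq> Q i}) \<longleftrightarrow> (odd (card {i\<in>A. P i}) \<noteq> odd (card {i\<in>A. Q i}))"
proof -
  have "even (card {i\<in>A. P i \<noteq> Q i}) = even (card {i\<in>A. P i \<noteq> Q i} + 2 * card {i\<in>A. P i \<and> Q i})"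
    by simp
  then show ?thesis unfolding card_parity[OF assms] by auto
qed

lemma chi_xor: "chi n e (xorv x y) = chi n e x * chi n e y"
proof -
  let ?A = "{i. i < n \<and> e i}"
  have fA: "finite ?A" by simp
  have e1: "{i. i < n \<and> e i \<and> xorv x y i} = {i\<in>?A. x i \<noteq> y i}" by (auto simp: xorv_def)
  have e2: "{i. i < n \<and> e i \<and> x i} = {i\<in>?A. x i}" by auto
  have e3: "{i. i < n \<and> e i \<and> y i} = {i\<in>?A. y i}" by auto
  have "((-1::real) ^ card {i\<in>?A. x i \<noteq> y i}) = (-1) ^ (card {i\<in>?A. x i \<noteq> y i} + 2 * card {i\<in>?A. x i \<and> y i})"
    by (simp add: power_add)
  also have "\<dots> = (-1) ^ (card {i\<in>?A. x i} + card {i\<in>?A. y i})"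
    unfolding card_parity[OF fA] ..
  finally show ?thesis unfolding chi_def e1 e2 e3 by (simp add: power_add)
qed

lemma mat_vec_xor: "mat_vec k n G (xorv x y) = xorv (mat_vec k n G x) (mat_vec k n G y)"
proof
  fix i
  have fA: "finite {j. j < n \<and> G i j}" by simp
  have e1: "{j. j < n \<and> G i j \<and> xorv x y j} = {j\<in>{j. j < n \<and> G i j}. x j \<noteq> y j}" by (auto simp: xorv_def)
  have e2: "{j. j < n \<and> G i j \<and> x j} = {j\<in>{j. j < n \<and> G i j}. x j}" by auto
  have e3: "{j. j < n \<and> G i j \<and> y j} = {j\<in>{j. j < n \<and> G i j}. y j}" by auto
  have h: "odd (card {j. j < n \<and> G i j \<and> xorv x y j}) \<longleftrightarrow>
      (odd (card {j. j < n \<and> G i j \<and> x j}) \<noteq> odd (card {j. j < n \<and> G i j \<and> y j}))"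
    by (simp only: e1 e2 e3 card_parity_odd[OF fA])
  show "mat_vec k n G (xorv x y) i = xorv (mat_vec k n G x) (mat_vec k n G y) i"
    unfolding mat_vec_def using h by (auto simp: xorv_def)
qed

lemma F2vecs_xor: "x \<in> F2vecs n \<Longrightarrow> y \<in> F2vecs n \<Longrightarrow> xorv x y \<in> F2vecs n"
  by (auto simp: F2vecs_def xorv_def)

lemma mat_vec_in: "mat_vec k n G x \<in> F2vecs k"
  by (auto simp: F2vecs_def mat_vec_def)

lemma xorv_cancel: "xorv (xorv x y) y = x"
  by (auto simp: xorv_def)

definition supp :: "nat \<Rightarrow> (nat \<Rightarrow> bool) \<Rightarrow> nat set" where
  "supp n x = {i. i < n \<and> x i}"

lemma bij_supp: "bij_betw (supp n) (F2vecs n) (Pow {..<n})"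
proof (rule bij_betw_byWitness[where f' = "\<lambda>A i. i \<in> A"])
  show "\<forall>a\<in>F2vecs n. (\<lambda>i. i \<in> supp n a) = a"
  proof
    fix a assume a: "a \<in> F2vecs n"
    show "(\<lambda>i. i \<in> supp n a) = a"
    proof
      fix i show "(i \<in> supp n a) = a i" using a unfolding F2vecs_def supp_def
        by (cases "i < n") auto
    qed
  qed
  show "\<forall>a'\<in>Pow {..<n}. supp n (\<lambda>i. i \<in> a') = a'" by (auto simp: supp_def)
  show "supp n ` F2vecs n \<subseteq> Pow {..<n}" by (auto simp: supp_def)
  show "(\<lambda>A i. i \<in> A) ` Pow {..<n} \<subseteq> F2vecs n" by (auto simp: F2vecs_def)
qed

lemma finite_F2vecs: "finite (F2vecs n)"
  using bij_betw_finite[OF bij_supp] by (simp only: finite_Pow_iff finite_lessThan)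

lemma card_F2vecs: "card (F2vecs n) = 2 ^ n"
  using bij_betw_same_card[OF bij_supp] card_Pow[of "{..<n}"] by simp

lemma hweight_supp: "hweight n x = card (supp n x)"
  by (simp add: hweight_def supp_def)

lemma card_level: "card {v\<in>F2vecs n. hweight n v = j} = n choose j"
proof -
  have inj: "inj_on (supp n) {v\<in>F2vecs n. hweight n v = j}"
  proof -
    have "inj_on (supp n) (F2vecs n)" using bij_supp by (simp add: bij_betw_def)
    then show ?thesis by (rule inj_on_subset) auto
  qed
  have im: "supp n ` {v\<in>F2vecs n. hweight n v = j} = {A. A \<subseteq> {..<n} \<and> card A = j}"
  proof
    show "supp n ` {v \<in> F2vecs n. hweight n v = j} \<subseteq> {A. A \<subseteq> {..<n} \<and> card A = j}"
      by (auto simp: supp_def hweight_supp)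
    show "{A. A \<subseteq> {..<n} \<and> card A = j} \<subseteq> supp n ` {v \<in> F2vecs n. hweight n v = j}"
    proof
      fix A assume A: "A \<in> {A. A \<subseteq> {..<n} \<and> card A = j}"
      have "(\<lambda>i. i \<in> A) \<in> F2vecs n" using A by (auto simp: F2vecs_def)
      moreover have "supp n (\<lambda>i. i \<in> A) = A" using A by (auto simp: supp_def)
      ultimately show "A \<in> supp n ` {v \<in> F2vecs n. hweight n v = j}"
        using A by (auto simp: hweight_supp intro!: image_eqI[where x="\<lambda>i. i \<in> A"])
    qed
  qed
  show ?thesis using card_image[OF inj] im n_subsets[of "{..<n}" j] by simp
qed



lemma kraw_count:
  assumes U: "finite U" and X: "X \<subseteq> U" and j: "j \<le> w"
  shows "card {E. E \<subseteq> U \<and> card E = w \<and> card (E \<inter> X) = j}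
       = (card X choose j) * (card (U - X) choose (w - j))"
proof -
  have fX: "finite X" using U X finite_subset by blast
  have bij: "bij_betw (\<lambda>(A,B). A \<union> B) ({A. A \<subseteq> X \<and> card A = j} \<times> {B. B \<subseteq> U - X \<and> card B = w - j})
     {E. E \<subseteq> U \<and> card E = w \<and> card (E \<inter> X) = j}"
  proof (rule bij_betw_byWitness[where f' = "\<lambda>E. (E \<inter> X, E - X)"])
    show "\<forall>a\<in>{A. A \<subseteq> X \<and> card A = j} \<times> {B. B \<subseteq> U - X \<and> card B = w - j}.
       (\<lambda>E. (E \<inter> X, E - X)) ((\<lambda>(A,B). A \<union> B) a) = a"
      by auto
    show "\<forall>a'\<in>{E. E \<subseteq> U \<and> card E = w \<and> card (E \<inter> X) = j}.
       (case (a' \<inter> X, a' - X) of (A, B) \<Rightarrow> A \<union> B) = a'" by auto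
    show "(\<lambda>(A, B). A \<union> B) ` ({A. A \<subseteq> X \<and> card A = j} \<times> {B. B \<subseteq> U - X \<and> card B = w - j})
      \<subseteq> {E. E \<subseteq> U \<and> card E = w \<and> card (E \<inter> X) = j}"
    proof clarify
      fix A B assume A: "A \<subseteq> X" "j = card A" and B: "B \<subseteq> U - X" "card B = w - card A"
      have fA: "finite A" using fX A finite_subset by blast
      have fB: "finite B" using U B finite_subset by blast
      have d: "A \<inter> B = {}" using A B by auto
      have "card (A \<union> B) = card A + card B" using card_Un_disjoint[OF fA fB d] .
      moreover have "(A \<union> B) \<inter> X = A" using A B by auto
      ultimately show "A \<union> B \<subseteq> U \<and> card (A \<union> B) = w \<and> card ((A \<union> B) \<inter> X) = card A"
        using A B j X by auto
    qed
    show "(\<lambda>E. (E \<inter> X, E - X)) ` {E. E \<subseteq> U \<and> card E = w \<and> card (E \<inter> X) = j}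
      \<subseteq> {A. A \<subseteq> X \<and> card A = j} \<times> {B. B \<subseteq> U - X \<and> card B = w - j}"
    proof
      fix p assume "p \<in> (\<lambda>E. (E \<inter> X, E - X)) ` {E. E \<subseteq> U \<and> card E = w \<and> card (E \<inter> X) = j}"
      then obtain E where E: "E \<subseteq> U" "card E = w" "card (E \<inter> X) = j" and p: "p = (E \<inter> X, E - X)" by auto
      have fE: "finite E" using U E finite_subset by blast
      have "card (E - X) = card E - card (E \<inter> X)"
        by (metis Diff_Int2 Diff_Int_distrib2 card_Diff_subset_Int fE finite_Int inf.idem)
      then show "p \<in> {A. A \<subseteq> X \<and> card A = j} \<times> {B. B \<subseteq> U - X \<and> card B = w - j}"
        using E p by auto
    qed
  qed
  have fA: "finite {A. A \<subseteq> X \<and> card A = j}" using fX by simp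
  have fB: "finite {B. B \<subseteq> U - X \<and> card B = w - j}" using U by simp
  show ?thesis using bij_betw_same_card[OF bij] card_cartesian_product[of "{A. A \<subseteq> X \<and> card A = j}" "{B. B \<subseteq> U - X \<and> card B = w - j}"]
    n_subsets[OF fX, of j] n_subsets[of "U - X" "w - j"] U by simp
qed

lemma kraw_sum:
  assumes U: "finite U" and X: "X \<subseteq> U"
  shows "(\<Sum>E\<in>{E. E \<subseteq> U \<and> card E = w}. (-1::real) ^ card (E \<inter> X))
     = (\<Sum>j = 0..w. (-1) ^ j * real (card X choose j) * real ((card U - card X) choose (w - j)))"
proof -
  let ?W = "{E. E \<subseteq> U \<and> card E = w}"
  have fW: "finite ?W" using U by simp
  have img: "(\<lambda>E. card (E \<inter> X)) ` ?W \<subseteq> {0..w}"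
  proof clarify
    fix E assume "E \<subseteq> U" "w = card E"
    then show "card (E \<inter> X) \<in> {0..card E}" using U
      by (simp add: card_mono finite_subset)
  qed
  have "(\<Sum>E\<in>?W. (-1::real) ^ card (E \<inter> X)) =
     (\<Sum>j\<in>{0..w}. \<Sum>E\<in>{E\<in>?W. card (E \<inter> X) = j}. (-1::real) ^ card (E \<inter> X))"
    using sum.group[OF fW _ img, of "\<lambda>E. (-1::real) ^ card (E \<inter> X)"] by simp
  also have "\<dots> = (\<Sum>j\<in>{0..w}. (-1) ^ j * real (card X choose j) * real ((card U - card X) choose (w - j)))"
  proof (rule sum.cong[OF refl])
    fix j assume j: "j \<in> {0..w}"
    have "(\<Sum>E\<in>{E\<in>?W. card (E \<inter> X) = j}. (-1::real) ^ card (E \<inter> X))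
        = (\<Sum>E\<in>{E\<in>?W. card (E \<inter> X) = j}. (-1::real) ^ j)" by simp
    also have "\<dots> = real (card {E\<in>?W. card (E \<inter> X) = j}) * (-1) ^ j" by simp
    also have "{E\<in>?W. card (E \<inter> X) = j} = {E. E \<subseteq> U \<and> card E = w \<and> card (E \<inter> X) = j}" by auto
    also have "card \<dots> = (card X choose j) * (card (U - X) choose (w - j))"
      using kraw_count[OF U X] j by simp
    also have "card (U - X) = card U - card X" using U X by (simp add: card_Diff_subset finite_subset)
    finally show "(\<Sum>E\<in>{E\<in>?W. card (E \<inter> X) = j}. (-1::real) ^ card (E \<inter> X))
       = (-1) ^ j * real (card X choose j) * real ((card U - card X) choose (w - j))" by simp
  qed
  finally show ?thesis by simp
qed

definition Ew :: "nat \<Rightarrow> nat \<Rightarrow> (nat \<Rightarrow> bool) set" where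
  "Ew n w = {e\<in>F2vecs n. hweight n e = w}"

definition FF :: "nat \<Rightarrow> nat \<Rightarrow> (nat \<Rightarrow> bool) \<Rightarrow> real" where
  "FF n w v = (\<Sum>e\<in>Ew n w. chi n e v)"

lemma kraw_F: "FF n w v = krawtchouk n w (hweight n v)"
proof -
  have inj: "inj_on (supp n) (Ew n w)"
  proof -
    have "inj_on (supp n) (F2vecs n)" using bij_supp by (simp add: bij_betw_def)
    then show ?thesis by (rule inj_on_subset) (auto simp: Ew_def)
  qed
  have im: "supp n ` (Ew n w) = {A. A \<subseteq> {..<n} \<and> card A = w}"
  proof
    show "supp n ` Ew n w \<subseteq> {A. A \<subseteq> {..<n} \<and> card A = w}"
      by (auto simp: supp_def hweight_supp Ew_def)
    show "{A. A \<subseteq> {..<n} \<and> card A = w} \<subseteq> supp n ` Ew n w"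
    proof
      fix A assume A: "A \<in> {A. A \<subseteq> {..<n} \<and> card A = w}"
      have "(\<lambda>i. i \<in> A) \<in> F2vecs n" using A by (auto simp: F2vecs_def)
      moreover have "supp n (\<lambda>i. i \<in> A) = A" using A by (auto simp: supp_def)
      ultimately show "A \<in> supp n ` Ew n w"
        using A by (auto simp: hweight_supp Ew_def intro!: image_eqI[where x="\<lambda>i. i \<in> A"])
    qed
  qed
  have chi': "chi n e v = (-1) ^ card (supp n e \<inter> supp n v)" for e
  proof -
    have "{i. i < n \<and> e i \<and> v i} = supp n e \<inter> supp n v" by (auto simp: supp_def)
    then show ?thesis by (simp add: chi_def)
  qed
  have "FF n w v = (\<Sum>e\<in>Ew n w. (-1::real) ^ card (supp n e \<inter> supp n v))"
    unfolding FF_def chi' ..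
  also have "\<dots> = (\<Sum>E\<in>supp n ` Ew n w. (-1::real) ^ card (E \<inter> supp n v))"
    using sum.reindex[OF inj, of "\<lambda>E. (-1::real) ^ card (E \<inter> supp n v)"] by simp
  also have "\<dots> = (\<Sum>j = 0..w. (-1) ^ j * real (card (supp n v) choose j) * real ((card {..<n} - card (supp n v)) choose (w - j)))"
    unfolding im by (rule kraw_sum) (auto simp: supp_def)
  finally show ?thesis by (simp add: krawtchouk_def hweight_supp)
qed

lemma card_Ew: "card (Ew n w) = n choose w"
  unfolding Ew_def by (rule card_level)



lemma parity_card_odd:
  assumes "finite A"
  shows "even (card {j\<in>A. odd (c j :: nat)}) \<longleftrightarrow> even (\<Sum>j\<in>A. c j)"
  using assms
proof (induction A rule: finite_induct)
  case empty then show ?case by simp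
next
  case (insert a A)
  have "{j\<in>insert a A. odd (c j)} = (if odd (c a) then insert a {j\<in>A. odd (c j)} else {j\<in>A. odd (c j)})"
    by auto
  then show ?case using insert by (auto simp: card_insert_if)
qed

lemma card_filter_sum: "finite A \<Longrightarrow> card {x\<in>A. P x} = (\<Sum>x\<in>A. if P x then 1 else 0 :: nat)"
  by (simp add: sum.If_cases Int_def conj_commute)

lemma ker_dual:
  assumes v: "v \<in> F2vecs n" and ker: "mat_vec k n G v = (\<lambda>_. False)"
  shows "v \<in> dual_code n (gen_code k n G)"
proof -
  have "\<not> f2inner n (encode k n G m) v" for m
  proof -
    let ?I = "{i. i < k \<and> m i}" and ?J = "{j. j < n \<and> v j}"
    let ?c = "\<lambda>j. card {i\<in>?I. G i j}"
    have fI: "finite ?I" and fJ: "finite ?J" by auto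
    have e1: "{i. i < n \<and> encode k n G m i \<and> v i} = {j\<in>?J. odd (?c j)}"
    proof -
      have "{i. i < k \<and> m i \<and> G i j} = {i\<in>?I. G i j}" for j by auto
      then show ?thesis unfolding encode_def by auto
    qed
    have "(\<Sum>j\<in>?J. ?c j) = (\<Sum>j\<in>?J. \<Sum>i\<in>?I. if G i j then 1 else 0)"
      using card_filter_sum[OF fI] by simp
    also have "\<dots> = (\<Sum>i\<in>?I. \<Sum>j\<in>?J. if G i j then 1 else 0)" by (rule sum.swap)
    also have "\<dots> = (\<Sum>i\<in>?I. card {j\<in>?J. G i j})"
      using card_filter_sum[OF fJ] by simp
    finally have s: "(\<Sum>j\<in>?J. ?c j) = (\<Sum>i\<in>?I. card {j\<in>?J. G i j})" .
    have "even (card {j\<in>?J. G i j})" if i: "i \<in> ?I" for i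
    proof -
      have "\<not> mat_vec k n G v i" using ker by simp
      moreover have "{j. j < n \<and> G i j \<and> v j} = {j\<in>?J. G i j}" by auto
      ultimately show ?thesis using i unfolding mat_vec_def by auto
    qed
    then have "even (\<Sum>i\<in>?I. card {j\<in>?J. G i j})" by (intro dvd_sum) blast
    then have "even (card {j\<in>?J. odd (?c j)})" using parity_card_odd[OF fJ, of ?c] s by simp
    then show ?thesis unfolding f2inner_def e1 by simp
  qed
  then show ?thesis using v unfolding dual_code_def gen_code_def by auto
qed

lemma card_dual:
  "2 ^ n \<le> card (dual_code n (gen_code k n G)) * 2 ^ k"
proof -
  let ?f = "mat_vec k n G"
  let ?K = "{v\<in>F2vecs n. ?f v = (\<lambda>_. False)}"
  have fK: "finite ?K" using finite_F2vecs by simp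
  have Kd: "?K \<subseteq> dual_code n (gen_code k n G)" using ker_dual by blast
  have fD: "finite (dual_code n (gen_code k n G))"
    using finite_F2vecs by (rule finite_subset[rotated]) (auto simp: dual_code_def)
  have fib: "card {x\<in>F2vecs n. ?f x = y} \<le> card ?K" for y
  proof (cases "{x\<in>F2vecs n. ?f x = y} = {}")
    case True show ?thesis unfolding True by simp
  next
    case False
    then obtain x0 where x0: "x0 \<in> F2vecs n" "?f x0 = y" by auto
    have inj: "inj_on (\<lambda>x. xorv x x0) {x\<in>F2vecs n. ?f x = y}"
      by (rule inj_onI) (metis xorv_cancel)
    have "(\<lambda>x. xorv x x0) ` {x\<in>F2vecs n. ?f x = y} \<subseteq> ?K"
    proof
      fix p assume "p \<in> (\<lambda>x. xorv x x0) ` {x\<in>F2vecs n. ?f x = y}"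
      then obtain x where x: "x \<in> F2vecs n" "?f x = y" and p: "p = xorv x x0" by auto
      have "xorv x x0 \<in> F2vecs n \<and> ?f (xorv x x0) = (\<lambda>_. False)"
      proof
        show "xorv x x0 \<in> F2vecs n" using F2vecs_xor[OF x(1) x0(1)] .
        have "?f (xorv x x0) = xorv (?f x) (?f x0)" by (rule mat_vec_xor)
        also have "\<dots> = (\<lambda>_. False)" using x x0 by (simp add: xorv_def)
        finally show "?f (xorv x x0) = (\<lambda>_. False)" .
      qed
      then show "p \<in> ?K" using p by simp
    qed
    then show ?thesis using card_inj_on_le[OF inj _ fK] by simp
  qed
  have eqU: "F2vecs n = (\<Union>y\<in>?f ` F2vecs n. {x\<in>F2vecs n. ?f x = y})" by auto
  have "card (F2vecs n) \<le> (\<Sum>y\<in>?f ` F2vecs n. card {x\<in>F2vecs n. ?f x = y})"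
    by (subst eqU) (rule card_UN_le, rule finite_imageI, rule finite_F2vecs)
  also have "\<dots> \<le> (\<Sum>y\<in>?f ` F2vecs n. card ?K)" by (rule sum_mono) (rule fib)
  also have "\<dots> = card (?f ` F2vecs n) * card ?K" by simp
  also have "\<dots> \<le> card (F2vecs k) * card ?K"
  proof -
    have "card (?f ` F2vecs n) \<le> card (F2vecs k)"
      by (rule card_mono[OF finite_F2vecs]) (auto intro: mat_vec_in)
    then show ?thesis by simp
  qed
  also have "\<dots> \<le> card (F2vecs k) * card (dual_code n (gen_code k n G))"
    using card_mono[OF fD Kd] by simp
  finally show ?thesis by (simp add: card_F2vecs mult.commute)
qed



lemma prob_sum:
  assumes "finite S" "set_pmf Z \<subseteq> S"
  shows "measure_pmf.prob Z A = (\<Sum>z\<in>S\<inter>A. pmf Z z)"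
proof -
  have "measure_pmf.prob Z A = measure_pmf.prob Z (A \<inter> set_pmf Z)" by (simp add: measure_Int_set_pmf)
  also have "A \<inter> set_pmf Z = (S \<inter> A) \<inter> set_pmf Z" using assms by auto
  also have "measure_pmf.prob Z \<dots> = measure_pmf.prob Z (S \<inter> A)" by (simp add: measure_Int_set_pmf)
  also have "\<dots> = (\<Sum>z\<in>S\<inter>A. pmf Z z)" using assms by (simp add: measure_measure_pmf_finite)
  finally show ?thesis .
qed

lemma tv_lemma:
  assumes S: "finite S" and P: "set_pmf P \<subseteq> S" and Q: "set_pmf Q \<subseteq> S" and T: "T \<subseteq> S"
  shows "(\<Sum>x\<in>T. pmf P x) - (\<Sum>x\<in>T. pmf Q x) \<le> tv_dist_on S P Q"
proof -
  have fT: "finite T" using S T finite_subset by blast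
  have s1: "(\<Sum>x\<in>S. pmf P x) = 1" and s2: "(\<Sum>x\<in>S. pmf Q x) = 1"
    using sum_pmf_eq_1[OF S P] sum_pmf_eq_1[OF S Q] by auto
  have split: "(\<Sum>x\<in>S. f x) = (\<Sum>x\<in>T. f x) + (\<Sum>x\<in>S-T. f x)" for f :: "'a \<Rightarrow> real"
    using sum.subset_diff[OF T S, of f] by (simp add: add.commute)
  have z: "(\<Sum>x\<in>T. pmf P x - pmf Q x) + (\<Sum>x\<in>S-T. pmf P x - pmf Q x) = 0"
    using split[of "\<lambda>x. pmf P x - pmf Q x"] s1 s2 by (simp add: sum_subtractf)
  have a: "(\<Sum>x\<in>T. pmf P x - pmf Q x) \<le> (\<Sum>x\<in>T. \<bar>pmf P x - pmf Q x\<bar>)"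
    by (rule sum_mono) simp
  have b: "- (\<Sum>x\<in>S-T. pmf P x - pmf Q x) \<le> (\<Sum>x\<in>S-T. \<bar>pmf P x - pmf Q x\<bar>)"
    by (simp add: sum_negf[symmetric] del: sum_negf) (rule sum_mono, simp)
  have "2 * (\<Sum>x\<in>T. pmf P x - pmf Q x) \<le> (\<Sum>x\<in>S. \<bar>pmf P x - pmf Q x\<bar>)"
    using a b z split[of "\<lambda>x. \<bar>pmf P x - pmf Q x\<bar>"] by linarith
  then show ?thesis unfolding tv_dist_on_def by (simp add: sum_subtractf)
qed

lemma unif_bound:
  assumes Z_vec: "set_pmf Z \<subseteq> F2vecs n"
    and tv: "tv_dist_on (F2vecs k) (map_pmf (mat_vec k n G) Z) (pmf_of_set (F2vecs k)) \<le> \<epsilon>"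
    and T: "T \<subseteq> F2vecs k"
  shows "measure_pmf.prob Z (mat_vec k n G -` T) \<le> real (card T) / 2 ^ k + \<epsilon>"
proof -
  let ?P = "map_pmf (mat_vec k n G) Z" and ?U = "pmf_of_set (F2vecs k)"
  have fk: "finite (F2vecs k)" by (rule finite_F2vecs)
  have ne: "F2vecs k \<noteq> {}" using card_F2vecs[of k] by auto
  have fT: "finite T" using fk T finite_subset by blast
  have sP: "set_pmf ?P \<subseteq> F2vecs k" using mat_vec_in by auto
  have sU: "set_pmf ?U \<subseteq> F2vecs k" using fk ne by simp
  have "measure_pmf.prob Z (mat_vec k n G -` T) = measure_pmf.prob ?P T" by simp
  also have "\<dots> = (\<Sum>x\<in>T. pmf ?P x)" using fT by (rule measure_measure_pmf_finite)
  also have "\<dots> \<le> (\<Sum>x\<in>T. pmf ?U x) + \<epsilon>" using tv_lemma[OF fk sP sU T] tv by linarith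
  also have "(\<Sum>x\<in>T. pmf ?U x) = (\<Sum>x\<in>T. 1 / 2 ^ k)"
    using fk ne T by (intro sum.cong) (auto simp: card_F2vecs)
  also have "\<dots> = real (card T) / 2 ^ k" by simp
  finally show ?thesis .
qed



lemma FF_abs_le: "\<bar>FF n w v\<bar> \<le> real (n choose w)"
proof -
  have "\<bar>FF n w v\<bar> \<le> (\<Sum>e\<in>Ew n w. \<bar>chi n e v\<bar>)" unfolding FF_def by (rule sum_abs)
  also have "\<dots> = (\<Sum>e\<in>Ew n w. 1)" by (simp add: chi_def)
  also have "\<dots> = real (n choose w)" using card_Ew[of n w] by simp
  finally show ?thesis .
qed

definition compv :: "nat \<Rightarrow> (nat \<Rightarrow> bool) \<Rightarrow> (nat \<Rightarrow> bool)" where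
  "compv n v = (\<lambda>i. i < n \<and> \<not> v i)"

lemma compv_in: "compv n v \<in> F2vecs n" by (auto simp: compv_def F2vecs_def)

lemma compv_compv: "v \<in> F2vecs n \<Longrightarrow> compv n (compv n v) = v"
  by (auto simp: compv_def F2vecs_def fun_eq_iff) (meson not_le)

lemma hweight_compv: "hweight n (compv n v) = n - hweight n v"
proof -
  have "{i. i < n \<and> compv n v i} = {..<n} - {i. i < n \<and> v i}" by (auto simp: compv_def)
  then have "card {i. i < n \<and> compv n v i} = card {..<n} - card {i. i < n \<and> v i}"
    by (simp add: card_Diff_subset subset_eq)
  then show ?thesis by (simp add: hweight_def)
qed

lemma hweight_le: "hweight n v \<le> n"
proof -
  have "card {i. i < n \<and> v i} \<le> card {..<n}" by (rule card_mono) auto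
  then show ?thesis by (simp add: hweight_def)
qed

lemma FF_compv: "FF n w (compv n v) = (-1) ^ w * FF n w v"
proof -
  let ?one = "\<lambda>i. i < n"
  have "chi n e (compv n v) = (-1) ^ w * chi n e v" if e: "e \<in> Ew n w" for e
  proof -
    have "chi n e (compv n v) = chi n e (xorv v ?one)"
      unfolding chi_def compv_def xorv_def by (rule arg_cong[where f="\<lambda>x. (-1) ^ card x"]) auto
    also have "\<dots> = chi n e v * chi n e ?one" by (rule chi_xor)
    also have "chi n e ?one = (-1) ^ w"
    proof -
      have "{i. i < n \<and> e i \<and> i < n} = {i. i < n \<and> e i}" by auto
      then show ?thesis using e by (simp add: chi_def Ew_def hweight_def)
    qed
    finally show ?thesis by simp
  qed
  then show ?thesis unfolding FF_def by (simp add: sum_distrib_left)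
qed

lemma card_ball: "card {v\<in>F2vecs n. hweight n v \<le> t} \<le> hamming_ball_vol n t"
proof -
  have "{v\<in>F2vecs n. hweight n v \<le> t} = (\<Union>j\<in>{0..t}. {v\<in>F2vecs n. hweight n v = j})" by auto
  then have "card {v\<in>F2vecs n. hweight n v \<le> t} \<le> (\<Sum>j\<in>{0..t}. card {v\<in>F2vecs n. hweight n v = j})"
    by (simp add: card_UN_le)
  then show ?thesis by (simp add: card_level hamming_ball_vol_def)
qed

lemma card_ball2: "card {v\<in>F2vecs n. n - t \<le> hweight n v} \<le> hamming_ball_vol n t"
proof -
  have "{v\<in>F2vecs n. n - t \<le> hweight n v} \<subseteq> compv n ` {v\<in>F2vecs n. hweight n v \<le> t}"
  proof
    fix v assume v: "v \<in> {v\<in>F2vecs n. n - t \<le> hweight n v}"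
    have "compv n v \<in> {v\<in>F2vecs n. hweight n v \<le> t}"
      using v compv_in[of n v] hweight_compv[of n v] by auto
    moreover have "v = compv n (compv n v)" using v compv_compv by auto
    ultimately show "v \<in> compv n ` {v\<in>F2vecs n. hweight n v \<le> t}" by blast
  qed
  then have "card {v\<in>F2vecs n. n - t \<le> hweight n v} \<le> card (compv n ` {v\<in>F2vecs n. hweight n v \<le> t})"
    by (rule card_mono[rotated]) (simp add: finite_F2vecs)
  also have "\<dots> \<le> card {v\<in>F2vecs n. hweight n v \<le> t}" by (rule card_image_le) (simp add: finite_F2vecs)
  finally show ?thesis using card_ball[of n t] by linarith
qed

lemma middle_bound:
  fixes q Cc :: real
  assumes kr: "\<And>i. real i \<le> real n / 2 \<Longrightarrow> \<bar>krawtchouk n w i\<bar> \<le> Cc * real (n choose w) * q ^ i"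
    and q: "0 \<le> q" "q \<le> 1" and Cc: "0 \<le> Cc"
    and v: "v \<in> F2vecs n" and lo: "t < hweight n v" and hi: "hweight n v < n - t"
  shows "\<bar>FF n w v\<bar> \<le> Cc * real (n choose w) * q ^ t"
proof -
  have B: "0 \<le> Cc * real (n choose w)" using Cc by simp
  show ?thesis
  proof (cases "real (hweight n v) \<le> real n / 2")
    case True
    have "\<bar>FF n w v\<bar> \<le> Cc * real (n choose w) * q ^ hweight n v"
      using kr[OF True] by (simp add: kraw_F)
    also have "\<dots> \<le> Cc * real (n choose w) * q ^ t"
      using B q lo by (intro mult_left_mono power_decreasing) auto
    finally show ?thesis .
  next
    case False
    have hv: "hweight n v \<le> n" by (rule hweight_le)
    have h2: "real (hweight n (compv n v)) \<le> real n / 2"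
      using False hv by (simp add: hweight_compv of_nat_diff)
    have "\<bar>FF n w v\<bar> = \<bar>FF n w (compv n v)\<bar>" by (simp add: FF_compv abs_mult)
    also have "\<dots> \<le> Cc * real (n choose w) * q ^ hweight n (compv n v)"
      using kr[OF h2] by (simp add: kraw_F)
    also have "\<dots> \<le> Cc * real (n choose w) * q ^ t"
      using B q hi by (intro mult_left_mono power_decreasing) (auto simp: hweight_compv)
    finally show ?thesis .
  qed
qed



definition hat :: "nat \<Rightarrow> (nat \<Rightarrow> bool) pmf \<Rightarrow> (nat \<Rightarrow> bool) \<Rightarrow> real" where
  "hat n Z e = (\<Sum>z\<in>F2vecs n. pmf Z z * chi n e z)"

lemma bias_hat:
  assumes Z: "set_pmf Z \<subseteq> F2vecs n"
  shows "bias_inner n e Z = hat n Z e / 2"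
proof -
  let ?S = "F2vecs n" and ?f = "\<lambda>z. f2inner n e z"
  have fS: "finite ?S" by (rule finite_F2vecs)
  have P: "measure_pmf.prob Z {z. ?f z} = (\<Sum>z\<in>?S. if ?f z then pmf Z z else 0)"
  proof -
    have "measure_pmf.prob Z {z. ?f z} = (\<Sum>z\<in>?S \<inter> {z. ?f z}. pmf Z z)" by (rule prob_sum[OF fS Z])
    also have "?S \<inter> {z. ?f z} = {z\<in>?S. ?f z}" by auto
    also have "(\<Sum>z\<in>{z\<in>?S. ?f z}. pmf Z z) = (\<Sum>z\<in>?S. if ?f z then pmf Z z else 0)"
      by (rule sum.inter_filter[OF fS])
    finally show ?thesis .
  qed
  have c: "pmf Z z * chi n e z = pmf Z z - 2 * (if ?f z then pmf Z z else 0)" for z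
    by (auto simp: chi_def f2inner_def)
  have "hat n Z e = (\<Sum>z\<in>?S. pmf Z z) - 2 * (\<Sum>z\<in>?S. if ?f z then pmf Z z else 0)"
    unfolding hat_def c by (simp add: sum_subtractf sum_distrib_left)
  also have "(\<Sum>z\<in>?S. pmf Z z) = 1" by (rule sum_pmf_eq_1[OF fS Z])
  finally show ?thesis unfolding bias_inner_def P by simp
qed

lemma sum_sq:
  "(\<Sum>e\<in>Ew n w. (hat n Z e)\<^sup>2) =
     (\<Sum>z\<in>F2vecs n. \<Sum>z'\<in>F2vecs n. pmf Z z * pmf Z z' * FF n w (xorv z z'))"
proof -
  let ?S = "F2vecs n"
  have h: "(hat n Z e)\<^sup>2 = (\<Sum>z\<in>?S. \<Sum>z'\<in>?S. pmf Z z * pmf Z z' * chi n e (xorv z z'))" for e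
    unfolding hat_def power2_eq_square sum_product chi_xor by (simp add: ac_simps)
  have "(\<Sum>e\<in>Ew n w. (hat n Z e)\<^sup>2) = (\<Sum>e\<in>Ew n w. \<Sum>z\<in>?S. \<Sum>z'\<in>?S. pmf Z z * pmf Z z' * chi n e (xorv z z'))"
    unfolding h ..
  also have "\<dots> = (\<Sum>z\<in>?S. \<Sum>e\<in>Ew n w. \<Sum>z'\<in>?S. pmf Z z * pmf Z z' * chi n e (xorv z z'))"
    by (rule sum.swap)
  also have "\<dots> = (\<Sum>z\<in>?S. \<Sum>z'\<in>?S. \<Sum>e\<in>Ew n w. pmf Z z * pmf Z z' * chi n e (xorv z z'))"
    by (rule sum.cong[OF refl]) (rule sum.swap)
  also have "\<dots> = (\<Sum>z\<in>?S. \<Sum>z'\<in>?S. pmf Z z * pmf Z z' * FF n w (xorv z z'))"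
    unfolding FF_def by (simp add: sum_distrib_left)
  finally show ?thesis .
qed

lemma pair_bound:
  assumes Z_vec: "set_pmf Z \<subseteq> F2vecs n"
    and tv: "tv_dist_on (F2vecs k) (map_pmf (mat_vec k n G) Z) (pmf_of_set (F2vecs k)) \<le> \<epsilon>"
    and R: "R \<subseteq> F2vecs n" and cR: "real (card R) \<le> V"
  shows "(\<Sum>z\<in>F2vecs n. \<Sum>z'\<in>F2vecs n. pmf Z z * pmf Z z' * (if xorv z z' \<in> R then 1 else 0))
     \<le> V / 2 ^ k + \<epsilon>"
proof -
  let ?S = "F2vecs n" and ?m = "mat_vec k n G"
  have fS: "finite ?S" by (rule finite_F2vecs)
  have inner: "(\<Sum>z'\<in>?S. pmf Z z' * (if xorv z z' \<in> R then 1 else 0)) \<le> V / 2 ^ k + \<epsilon>"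
    if z: "z \<in> ?S" for z
  proof -
    let ?T = "(\<lambda>y. xorv (?m z) y) ` ?m ` R"
    have T: "?T \<subseteq> F2vecs k" by (auto intro!: F2vecs_xor mat_vec_in)
    have cT: "card ?T \<le> card R"
      by (metis card_image_le finite_imageI finite_subset R fS le_trans)
    have "(\<Sum>z'\<in>?S. pmf Z z' * (if xorv z z' \<in> R then 1 else 0))
        \<le> (\<Sum>z'\<in>?S. if z' \<in> ?m -` ?T then pmf Z z' else 0)"
    proof (rule sum_mono)
      fix z' assume "z' \<in> ?S"
      have "xorv z z' \<in> R \<Longrightarrow> z' \<in> ?m -` ?T"
      proof -
        assume a: "xorv z z' \<in> R"
        have "?m z' = xorv (?m z) (?m (xorv z z'))" unfolding mat_vec_xor by (auto simp: xorv_def)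
        then show ?thesis using a by auto
      qed
      then show "pmf Z z' * (if xorv z z' \<in> R then 1 else 0) \<le> (if z' \<in> ?m -` ?T then pmf Z z' else 0)"
        by auto
    qed
    also have "\<dots> = (\<Sum>z'\<in>{z'\<in>?S. z' \<in> ?m -` ?T}. pmf Z z')" by (rule sum.inter_filter[OF fS, symmetric])
    also have "{z'\<in>?S. z' \<in> ?m -` ?T} = ?S \<inter> ?m -` ?T" by auto
    also have "(\<Sum>z'\<in>?S \<inter> ?m -` ?T. pmf Z z') = measure_pmf.prob Z (?m -` ?T)"
      by (rule prob_sum[OF fS Z_vec, symmetric])
    also have "\<dots> \<le> real (card ?T) / 2 ^ k + \<epsilon>" by (rule unif_bound[OF Z_vec tv T])
    also have "\<dots> \<le> V / 2 ^ k + \<epsilon>" using cT cR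
      by (simp add: divide_right_mono)
    finally show ?thesis .
  qed
  have "(\<Sum>z\<in>?S. \<Sum>z'\<in>?S. pmf Z z * pmf Z z' * (if xorv z z' \<in> R then 1 else 0))
      = (\<Sum>z\<in>?S. pmf Z z * (\<Sum>z'\<in>?S. pmf Z z' * (if xorv z z' \<in> R then 1 else 0)))"
    by (simp add: sum_distrib_left mult.assoc)
  also have "\<dots> \<le> (\<Sum>z\<in>?S. pmf Z z * (V / 2 ^ k + \<epsilon>))"
    by (rule sum_mono) (auto intro!: mult_left_mono inner)
  also have "\<dots> = V / 2 ^ k + \<epsilon>" using sum_pmf_eq_1[OF fS Z_vec] by (simp add: sum_distrib_right[symmetric])
  finally show ?thesis .
qed



lemma t1: fixes V e C q :: real and k :: nat
  shows "(2 * (V / 2 ^ k + e) + C * q) / 4 = V / 2 ^ (k + 1) + C * q / 4 + e / 2"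
  by (simp add: power_add field_simps)
lemma t2: fixes B X Y :: real shows "B * X + B * X + Y * B * q = B * (2 * X + Y * q)"
  by (simp add: algebra_simps)
lemma t3: fixes V D :: real and n k :: nat assumes "V * 2 ^ n \<le> V * (D * 2 ^ k)"
  shows "V / 2 ^ (k + 1) \<le> D * V / 2 ^ (n + 1)"
proof -
  have "V / 2 ^ (k + 1) = V * 2 ^ n / 2 ^ (n + k + 1)" by (simp add: power_add field_simps)
  also have "\<dots> \<le> V * (D * 2 ^ k) / 2 ^ (n + k + 1)" using assms by (simp add: divide_right_mono)
  also have "\<dots> = D * V / 2 ^ (n + 1)" by (simp add: power_add field_simps)
  finally show ?thesis .
qed

theorem mainTheorem4:
  fixes c Cc :: real and n k w :: nat and G :: "nat \<Rightarrow> nat \<Rightarrow> bool"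
    and Z :: "(nat \<Rightarrow> bool) pmf" and \<epsilon> :: real
  assumes c_range: "0 < c" "c < 1" and Cc_ge: "Cc \<ge> 1"
    and kraw: "\<And>n' w' i. n' \<ge> 1 \<Longrightarrow> real w' \<le> c * real n' \<Longrightarrow> real i \<le> real n' / 2 \<Longrightarrow>
        \<bar>krawtchouk n' w' i\<bar> \<le> Cc * real (n' choose w') * (1 - 2 * real w' / real n') ^ i"
    and k_range: "1 \<le> k" "k \<le> n - 1"
    and rank: "full_rank k n G"
    and w_le: "real w \<le> c * real n"
    and eps_pos: "\<epsilon> > 0"
    and Z_vec: "set_pmf Z \<subseteq> F2vecs n"
    and tv: "tv_dist_on (F2vecs k) (map_pmf (mat_vec k n G) Z) (pmf_of_set (F2vecs k)) \<le> \<epsilon>"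
  shows "\<exists>e \<in> F2vecs n. hweight n e = w \<and>
    \<bar>bias_inner n e Z\<bar> \<le>
      sqrt (real (card (dual_code n (gen_code k n G))) *
            real (hamming_ball_vol n ((dual_distance n (gen_code k n G) - 1) div 2)) / 2 ^ (n + 1))
      + sqrt (Cc * real n) / 2 *
          sqrt ((1 - 2 * real w / real n) ^ ((dual_distance n (gen_code k n G) - 1) div 2))
      + sqrt (\<epsilon> / 2)"
proof -
  define t where "t = (dual_distance n (gen_code k n G) - 1) div 2"
  define V where "V = real (hamming_ball_vol n t)"
  define D where "D = real (card (dual_code n (gen_code k n G)))"
  define q where "q = 1 - 2 * real w / real n"
  define B where "B = real (n choose w)"
  let ?S = "F2vecs n"
  let ?p = "pmf Z"
  have fS: "finite ?S" by (rule finite_F2vecs)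
  have n2: "n \<ge> 2" using k_range by linarith
  have wn: "w \<le> n"
  proof -
    have "real w \<le> c * real n" by (rule w_le)
    also have "\<dots> \<le> real n" using c_range mult_right_mono[of c 1 "real n"] by simp
    finally show ?thesis by simp
  qed
  have Bpos: "B > 0" using wn by (simp add: B_def)
  have kr: "\<And>i. real i \<le> real n / 2 \<Longrightarrow> \<bar>krawtchouk n w i\<bar> \<le> Cc * B * q ^ i"
    using kraw[of n w] n2 w_le by (simp add: B_def q_def)
  have q0: "0 \<le> q"
  proof -
    have h: "real 1 \<le> real n / 2" using n2 by simp
    have "0 \<le> Cc * B * q ^ 1" using kr[OF h] abs_ge_zero[of "krawtchouk n w 1"] by linarith
    then have "0 \<le> (Cc * B) * q" by simp
    moreover have "Cc * B > 0" using Cc_ge Bpos by simp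
    ultimately show ?thesis by (simp add: zero_le_mult_iff)
  qed
  have q1: "q \<le> 1" unfolding q_def using n2 by simp
  have Cc0: "0 \<le> Cc" using Cc_ge by simp
  let ?R1 = "{v\<in>?S. hweight n v \<le> t}" and ?R2 = "{v\<in>?S. n - t \<le> hweight n v}"
  let ?i1 = "\<lambda>v. if v \<in> ?R1 then 1 else (0::real)" and ?i2 = "\<lambda>v. if v \<in> ?R2 then 1 else (0::real)"
  have ptw: "\<bar>FF n w v\<bar> \<le> B * ?i1 v + B * ?i2 v + Cc * B * q ^ t" if v: "v \<in> ?S" for v
  proof -
    have nn: "0 \<le> Cc * B * q ^ t" using Cc0 Bpos q0 by simp
    show ?thesis
    proof (cases "v \<in> ?R1 \<or> v \<in> ?R2")
      case True
      then show ?thesis using FF_abs_le[of n w v] nn Bpos unfolding B_def by auto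
    next
      case False
      then have "t < hweight n v" "hweight n v < n - t" using v by auto
      then have "\<bar>FF n w v\<bar> \<le> Cc * B * q ^ t"
        using middle_bound[of n w Cc q v t] kr q0 q1 Cc0 v unfolding B_def by blast
      moreover have "?i1 v = 0" "?i2 v = 0" using False by auto
      ultimately show ?thesis by simp
    qed
  qed
  have pp: "\<And>z z'. 0 \<le> ?p z * ?p z'" by simp
  have sum1: "(\<Sum>z\<in>?S. ?p z) = 1" by (rule sum_pmf_eq_1[OF fS Z_vec])
  have "(\<Sum>e\<in>Ew n w. (hat n Z e)\<^sup>2) = (\<Sum>z\<in>?S. \<Sum>z'\<in>?S. ?p z * ?p z' * FF n w (xorv z z'))"
    by (rule sum_sq)
  also have "\<dots> \<le> (\<Sum>z\<in>?S. \<Sum>z'\<in>?S. ?p z * ?p z' * (B * ?i1 (xorv z z') + B * ?i2 (xorv z z') + Cc * B * q ^ t))"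
  proof (intro sum_mono)
    fix z z' assume z: "z \<in> ?S" and z': "z' \<in> ?S"
    have "?p z * ?p z' * FF n w (xorv z z') \<le> ?p z * ?p z' * \<bar>FF n w (xorv z z')\<bar>"
      using pp[of z z'] by (simp add: mult_left_mono)
    also have "\<dots> \<le> ?p z * ?p z' * (B * ?i1 (xorv z z') + B * ?i2 (xorv z z') + Cc * B * q ^ t)"
      using ptw[OF F2vecs_xor[OF z z']] pp[of z z'] by (rule mult_left_mono)
    finally show "?p z * ?p z' * FF n w (xorv z z') \<le> ?p z * ?p z' * (B * ?i1 (xorv z z') + B * ?i2 (xorv z z') + Cc * B * q ^ t)" .
  qed
  also have "\<dots> = B * (\<Sum>z\<in>?S. \<Sum>z'\<in>?S. ?p z * ?p z' * ?i1 (xorv z z'))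
      + B * (\<Sum>z\<in>?S. \<Sum>z'\<in>?S. ?p z * ?p z' * ?i2 (xorv z z'))
      + Cc * B * q ^ t * ((\<Sum>z\<in>?S. ?p z) * (\<Sum>z'\<in>?S. ?p z'))"
  proof -
    have pw: "?p z * ?p z' * (B * ?i1 (xorv z z') + B * ?i2 (xorv z z') + Cc * B * q ^ t)
       = B * (?p z * ?p z' * ?i1 (xorv z z')) + B * (?p z * ?p z' * ?i2 (xorv z z')) + Cc * B * q ^ t * (?p z * ?p z')"
      for z z' by (simp add: algebra_simps)
    show ?thesis unfolding pw by (simp only: sum.distrib sum_distrib_left[symmetric] sum_product)
  qed
  also have "\<dots> \<le> B * (V / 2 ^ k + \<epsilon>) + B * (V / 2 ^ k + \<epsilon>) + Cc * B * q ^ t"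
  proof -
    have a: "(\<Sum>z\<in>?S. \<Sum>z'\<in>?S. ?p z * ?p z' * ?i1 (xorv z z')) \<le> V / 2 ^ k + \<epsilon>"
      using pair_bound[OF Z_vec tv, of ?R1 V] card_ball[of n t] unfolding V_def by auto
    have b: "(\<Sum>z\<in>?S. \<Sum>z'\<in>?S. ?p z * ?p z' * ?i2 (xorv z z')) \<le> V / 2 ^ k + \<epsilon>"
      using pair_bound[OF Z_vec tv, of ?R2 V] card_ball2[of n t] unfolding V_def by auto
    have a': "B * (\<Sum>z\<in>?S. \<Sum>z'\<in>?S. ?p z * ?p z' * ?i1 (xorv z z')) \<le> B * (V / 2 ^ k + \<epsilon>)"
      using a Bpos by (intro mult_left_mono) auto
    have b': "B * (\<Sum>z\<in>?S. \<Sum>z'\<in>?S. ?p z * ?p z' * ?i2 (xorv z z')) \<le> B * (V / 2 ^ k + \<epsilon>)"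
      using b Bpos by (intro mult_left_mono) auto
    have "Cc * B * q ^ t * ((\<Sum>z\<in>?S. ?p z) * (\<Sum>z'\<in>?S. ?p z')) = Cc * B * q ^ t" using sum1 by simp
    then show ?thesis using a' b' by linarith
  qed
  also have "\<dots> = B * (2 * (V / 2 ^ k + \<epsilon>) + Cc * q ^ t)" by (rule t2)
  finally have tot: "(\<Sum>e\<in>Ew n w. (hat n Z e)\<^sup>2) \<le> B * (2 * (V / 2 ^ k + \<epsilon>) + Cc * q ^ t)" .
  define M where "M = 2 * (V / 2 ^ k + \<epsilon>) + Cc * q ^ t"
  have fE: "finite (Ew n w)" using fS by (simp add: Ew_def)
  have cE: "real (card (Ew n w)) = B" by (simp add: card_Ew B_def)
  have neE: "Ew n w \<noteq> {}" using cE Bpos by auto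
  have ex: "\<exists>e\<in>Ew n w. (hat n Z e)\<^sup>2 \<le> M"
  proof (rule ccontr)
    assume "\<not> (\<exists>e\<in>Ew n w. (hat n Z e)\<^sup>2 \<le> M)"
    then have all: "\<And>e. e \<in> Ew n w \<Longrightarrow> M < (hat n Z e)\<^sup>2" by (simp add: not_le)
    have "(\<Sum>e\<in>Ew n w. M) < (\<Sum>e\<in>Ew n w. (hat n Z e)\<^sup>2)"
      by (rule sum_strict_mono[OF fE neE]) (rule all)
    then have "B * M < B * M" using tot cE unfolding M_def by (simp add: mult.commute)
    then show False by simp
  qed
  then obtain e where e: "e \<in> Ew n w" and eM: "(hat n Z e)\<^sup>2 \<le> M" by blast
  have bsq: "(bias_inner n e Z)\<^sup>2 \<le> V / 2 ^ (k + 1) + Cc * q ^ t / 4 + \<epsilon> / 2"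
  proof -
    have "(bias_inner n e Z)\<^sup>2 = (hat n Z e)\<^sup>2 / 4" unfolding bias_hat[OF Z_vec] by (simp add: power_divide)
    also have "\<dots> \<le> M / 4" using eM by simp
    also have "\<dots> = V / 2 ^ (k + 1) + Cc * q ^ t / 4 + \<epsilon> / 2" unfolding M_def by (rule t1)
    finally show ?thesis .
  qed
  have V0: "0 \<le> V" by (simp add: V_def)
  have x0: "0 \<le> V / 2 ^ (k + 1)" using V0 by simp
  have y0: "0 \<le> Cc * q ^ t / 4" using Cc0 q0 by simp
  have z0: "0 \<le> \<epsilon> / 2" using eps_pos by simp
  have "\<bar>bias_inner n e Z\<bar> = sqrt ((bias_inner n e Z)\<^sup>2)" by simp
  also have "\<dots> \<le> sqrt (V / 2 ^ (k + 1) + Cc * q ^ t / 4 + \<epsilon> / 2)" by (rule real_sqrt_le_mono[OF bsq])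
  also have "\<dots> \<le> sqrt (V / 2 ^ (k + 1)) + sqrt (Cc * q ^ t / 4) + sqrt (\<epsilon> / 2)"
  proof -
    have "sqrt (V / 2 ^ (k + 1) + Cc * q ^ t / 4 + \<epsilon> / 2) \<le> sqrt (V / 2 ^ (k + 1) + Cc * q ^ t / 4) + sqrt (\<epsilon> / 2)"
      by (rule sqrt_add_le_add_sqrt) (use x0 y0 z0 in auto)
    moreover have "sqrt (V / 2 ^ (k + 1) + Cc * q ^ t / 4) \<le> sqrt (V / 2 ^ (k + 1)) + sqrt (Cc * q ^ t / 4)"
      by (rule sqrt_add_le_add_sqrt[OF x0 y0])
    ultimately show ?thesis by linarith
  qed
  also have "\<dots> \<le> sqrt (D * V / 2 ^ (n + 1)) + sqrt (Cc * real n) / 2 * sqrt (q ^ t) + sqrt (\<epsilon> / 2)"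
  proof -
    have h: "real (2 ^ n) \<le> real (card (dual_code n (gen_code k n G)) * 2 ^ k)"
      by (rule of_nat_mono[OF card_dual])
    have "2 ^ n \<le> D * 2 ^ k" using h unfolding D_def by simp
    then have "V * 2 ^ n \<le> V * (D * 2 ^ k)" using V0 by (rule mult_left_mono)
    then have "V / 2 ^ (k + 1) \<le> D * V / 2 ^ (n + 1)" by (rule t3)
    then have s1: "sqrt (V / 2 ^ (k + 1)) \<le> sqrt (D * V / 2 ^ (n + 1))" by simp
    have cq: "0 \<le> Cc * q ^ t" using Cc0 q0 by simp
    have n1: "1 \<le> real n" using n2 by simp
    have "Cc * q ^ t * 1 \<le> Cc * q ^ t * real n" by (rule mult_left_mono[OF n1 cq])
    then have "Cc * q ^ t / 4 \<le> (Cc * real n) * q ^ t / 4" by (simp add: ac_simps)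
    then have "sqrt (Cc * q ^ t / 4) \<le> sqrt ((Cc * real n) * q ^ t / 4)" by (rule real_sqrt_le_mono)
    also have "\<dots> = sqrt ((Cc * real n) * q ^ t) / sqrt 4" by (rule real_sqrt_divide)
    also have "sqrt 4 = (2::real)"
    proof -
      have "(4::real) = 2\<^sup>2" by simp
      then have "sqrt (4::real) = sqrt (2\<^sup>2)" by (rule arg_cong)
      also have "\<dots> = 2" by (rule real_sqrt_unique) auto
      finally show ?thesis .
    qed
    also have "sqrt ((Cc * real n) * q ^ t) = sqrt (Cc * real n) * sqrt (q ^ t)" by (rule real_sqrt_mult)
    also have "sqrt (Cc * real n) * sqrt (q ^ t) / 2 = sqrt (Cc * real n) / 2 * sqrt (q ^ t)" by simp
    finally have s2: "sqrt (Cc * q ^ t / 4) \<le> sqrt (Cc * real n) / 2 * sqrt (q ^ t)" .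
    show ?thesis using s1 s2 by linarith
  qed
  finally have fin: "\<bar>bias_inner n e Z\<bar> \<le> sqrt (D * V / 2 ^ (n + 1)) + sqrt (Cc * real n) / 2 * sqrt (q ^ t) + sqrt (\<epsilon> / 2)" .
  have eS: "e \<in> F2vecs n" and ew: "hweight n e = w" using e unfolding Ew_def by auto
  show ?thesis
  proof (rule bexI[OF _ eS], rule conjI[OF ew])
    show "\<bar>bias_inner n e Z\<bar> \<le>
      sqrt (real (card (dual_code n (gen_code k n G))) *
            real (hamming_ball_vol n ((dual_distance n (gen_code k n G) - 1) div 2)) / 2 ^ (n + 1))
      + sqrt (Cc * real n) / 2 *
          sqrt ((1 - 2 * real w / real n) ^ ((dual_distance n (gen_code k n G) - 1) div 2))
      + sqrt (\<epsilon> / 2)" using fin unfolding D_def V_def q_def t_def .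
  qed
qed


end
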